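(* For every $(C,v)\in\mathrm{SO}(3)\times\mathbb{R}$ with $C=(c_{jk})$, $$\rho_1(\mathrm{Id},(C,v))=\rho_2(\mathrm{Id},(\tilde C,v)),\quad \tilde C=\begin{pmatrix}c_{11}\cos v+c_{12}\sin v&c_{12}\cos v-c_{11}\sin v&c_{13}\\ c_{21}\cos v+c_{22}\sin v&c_{22}\cos v-c_{21}\sin v&c_{23}\\ c_{31}\cos v+c_{32}\sin v&c_{32}\cos v-c_{31}\sin v&c_{33}\end{pmatrix}.$$
   Context: $\mathrm{SO}(3)\times\mathbb{R}$ is the group of $4\times4$ matrices $(C,v)=\mathrm{diag}(C,e^v)$, $C\in\mathrm{SO}(3)$, $v\in\mathbb{R}$, with identity $\mathrm{Id}$. Let $E_1=e_{32}-e_{23}$, $E_2=e_{13}-e_{31}$, $E_3=e_{21}-e_{12}$, $E_4=e_{44}$ ($4\times4$ matrix units). $\rho_1$ (resp. $\rho_2$) is the left-invariant sub-Riemannian metric given by the left-invariant distribution with value $\mathrm{span}(E_1,E_4-E_3,E_2)$ (resp. $\mathrm{span}(E_1,E_4,E_2)$) at $\mathrm{Id}$ and the inner product making these three vectors orthonormal. *)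

theory Defs
  imports "HOL-Analysis.Analysis"
begin

text \<open>The group SO(3) x R: an element (C,v) is represented by the pair of a 3x3 real
matrix C (with C orthogonal, det C = 1) and v :: real; it stands for diag(C, e^v).
The Lie algebra element sum of the 3x3 block Omega and w e44 acts on the v-component
by v' = w (since d/dt e^v = e^v w).\<close>

definition E1 :: "real^3^3" where
  "E1 = vector [vector [0,0,0], vector [0,0,-1], vector [0,1,0]]"

definition E2 :: "real^3^3" where
  "E2 = vector [vector [0,0,1], vector [0,0,0], vector [-1,0,0]]"

definition E3 :: "real^3^3" where
  "E3 = vector [vector [0,-1,0], vector [1,0,0], vector [0,0,0]]"

text \<open>A horizontal curve for a left-invariant distribution spanned at Id by
three orthonormal vectors X1, X2, X3, where X_i = (A-part, b-part):
control u :: [0,1] -> R^3 (L^1), and g' = g (u1 X1 + u2 X2 + u3 X3) in integral form.\<close>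

definition horizontal ::
  "(real^3 \<Rightarrow> real^3^3) \<Rightarrow> (real^3 \<Rightarrow> real) \<Rightarrow>
   (real \<Rightarrow> real^3^3) \<Rightarrow> (real \<Rightarrow> real) \<Rightarrow> (real \<Rightarrow> real^3) \<Rightarrow> bool" where
  "horizontal A b C v u \<longleftrightarrow>
     u absolutely_integrable_on {0..1} \<and>
     (\<forall>t\<in>{0..1}. ((\<lambda>s. C s ** A (u s)) has_integral (C t - C 0)) {0..t} \<and>
                   ((\<lambda>s. b (u s)) has_integral (v t - v 0)) {0..t})"

definition sr_dist ::
  "(real^3 \<Rightarrow> real^3^3) \<Rightarrow> (real^3 \<Rightarrow> real) \<Rightarrow> real^3^3 \<Rightarrow> real \<Rightarrow> real" where
  "sr_dist A b C1 v1 = Inf {integral {0..1} (\<lambda>s. norm (u s)) | C v u.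
       horizontal A b C v u \<and> C 0 = mat 1 \<and> v 0 = 0 \<and> C 1 = C1 \<and> v 1 = v1}"

text \<open>rho1: frame E1, E4 - E3, E2.\<close>
definition rho1 :: "real^3^3 \<Rightarrow> real \<Rightarrow> real" where
  "rho1 = sr_dist (\<lambda>u. (u$1) *\<^sub>R E1 + (u$2) *\<^sub>R (- E3) + (u$3) *\<^sub>R E2) (\<lambda>u. u$2)"

text \<open>rho2: frame E1, E4, E2.\<close>
definition rho2 :: "real^3^3 \<Rightarrow> real \<Rightarrow> real" where
  "rho2 = sr_dist (\<lambda>u. (u$1) *\<^sub>R E1 + (u$3) *\<^sub>R E2) (\<lambda>u. u$2)"

definition Ctilde :: "real^3^3 \<Rightarrow> real \<Rightarrow> real^3^3" where
  "Ctilde C v = (\<chi> j k. if k = 1 then C$j$1 * cos v + C$j$2 * sin v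
                       else if k = 2 then C$j$2 * cos v - C$j$1 * sin v
                       else C$j$3)"

end

theory Submission
  imports Defs
begin


lemma bilinear_mm: "bilinear ((**) :: real^'n^'m \<Rightarrow> real^'p^'n \<Rightarrow> real^'p^'m)"
  unfolding bilinear_def
  by (auto simp: linear_iff vec_eq_iff matrix_matrix_mult_def sum.distrib sum_distrib_left algebra_simps)

lemma bilinear_mv: "bilinear ((*v) :: real^'n^'m \<Rightarrow> real^'n \<Rightarrow> real^'m)"
  unfolding bilinear_def
  by (auto simp: linear_iff matrix_vector_right_distrib matrix_vector_mult_add_rdistrib matrix_vector_mult_scaleR scaleR_matrix_vector_assoc)

lemma mvt_any:
  fixes f :: "real \<Rightarrow> real"
  assumes "\<And>x. DERIV f x :> f' x"
  shows "\<exists>\<xi>. \<bar>\<xi> - a\<bar> \<le> \<bar>b - a\<bar> \<and> f b - f a = f' \<xi> * (b - a)"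
proof (cases a b rule: linorder_cases)
  case less
  then obtain z where "a < z" "z < b" "f b - f a = (b - a) * f' z" using MVT2[OF less assms] by blast
  then show ?thesis by (intro exI[of _ z]) auto
next
  case equal then show ?thesis by auto
next
  case greater
  then obtain z where "b < z" "z < a" "f a - f b = (a - b) * f' z" using MVT2[OF greater assms] by blast
  then show ?thesis by (intro exI[of _ z]) (auto simp: algebra_simps)
qed

lemma lip_sin: fixes x y :: real shows "\<bar>sin x - sin y\<bar> \<le> \<bar>x - y\<bar>"
proof -
  obtain z where "sin x - sin y = cos z * (x - y)" using mvt_any[of sin cos y x] by auto
  then show ?thesis using abs_cos_le_one[of z] by (simp add: abs_mult mult_left_le_one_le)
qed

lemma lip_cos: fixes x y :: real shows "\<bar>cos x - cos y\<bar> \<le> \<bar>x - y\<bar>"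
proof -
  obtain z where "cos x - cos y = - sin z * (x - y)" using mvt_any[of cos "\<lambda>x. - sin x" y x] by auto
  then show ?thesis using abs_sin_le_one[of z] by (simp add: abs_mult mult_left_le_one_le)
qed

lemma cont_abs_prod:
  fixes f :: "real \<Rightarrow> 'a::euclidean_space" and g :: "real \<Rightarrow> 'b::euclidean_space"
    and h :: "'a \<Rightarrow> 'b \<Rightarrow> 'c::euclidean_space"
  assumes "bilinear h" "continuous_on {a..b} f" "g absolutely_integrable_on {a..b}"
  shows "(\<lambda>x. h (f x) (g x)) absolutely_integrable_on {a..b}"
proof (rule absolutely_integrable_bounded_measurable_product[OF assms(1) _ _ _ assms(3)])
  show "f \<in> borel_measurable (lebesgue_on {a..b})"
    by (rule continuous_imp_measurable_on_sets_lebesgue[OF assms(2)]) auto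
  show "bounded (f ` {a..b})"
    by (intro compact_imp_bounded compact_continuous_image assms(2)) auto
qed auto

lemma cont_abs_prod':
  fixes f :: "real \<Rightarrow> 'a::euclidean_space" and g :: "real \<Rightarrow> 'b::euclidean_space"
    and h :: "'b \<Rightarrow> 'a \<Rightarrow> 'c::euclidean_space"
  assumes "bilinear h" "continuous_on {a..b} f" "g absolutely_integrable_on {a..b}"
  shows "(\<lambda>x. h (g x) (f x)) absolutely_integrable_on {a..b}"
proof -
  have "bilinear (\<lambda>x y. h y x)" using assms(1) by (simp add: bilinear_def)
  from cont_abs_prod[OF this assms(2,3)] show ?thesis .
qed



lemma riemann_lemma:
  fixes F :: "real \<Rightarrow> 'a::banach" and h :: "real \<Rightarrow> 'a" and m :: "real \<Rightarrow> real"
  assumes ab: "a \<le> b" and h: "h integrable_on {a..b}" and m: "m integrable_on {a..b}"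
  and loc: "\<And>e. e > 0 \<Longrightarrow> \<exists>\<delta>>0. \<forall>x y. a \<le> x \<longrightarrow> x \<le> y \<longrightarrow> y \<le> b \<longrightarrow> y - x < \<delta> \<longrightarrow>
      norm (F y - F x - integral {x..y} h) \<le> e * integral {x..y} m"
  shows "F b - F a = integral {a..b} h"
proof -
  have key: "norm (F b - F a - integral {a..b} h) \<le> e * integral {a..b} m" if e: "e > 0" for e
  proof -
    obtain \<delta> where d: "\<delta> > 0" and loc': "\<And>x y. a \<le> x \<Longrightarrow> x \<le> y \<Longrightarrow> y \<le> b \<Longrightarrow> y - x < \<delta> \<Longrightarrow>
      norm (F y - F x - integral {x..y} h) \<le> e * integral {x..y} m"
      using loc[OF e] by blast
    obtain n :: nat where n: "(b - a) / \<delta> < n" using reals_Archimedean2 by blast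
    have "(b - a) / \<delta> \<ge> 0" using ab d by simp
    then have npos: "n > 0" using n by linarith
    define d where "d = (b - a) / n"
    have d0: "d \<ge> 0" using ab npos by (simp add: d_def)
    have dlt: "d < \<delta>" using n d npos by (simp add: d_def field_simps)
    have bn: "a + real n * d = b" using npos by (simp add: d_def)
    have "k \<le> n \<Longrightarrow> norm (F (a + real k * d) - F a - integral {a..a + real k * d} h)
             \<le> e * integral {a..a + real k * d} m" for k
    proof (induction k)
      case 0 then show ?case by simp
    next
      case (Suc k)
      let ?x = "a + real k * d" and ?y = "a + real (Suc k) * d"
      have "real (Suc k) * d \<le> real n * d" using Suc.prems d0 by (intro mult_right_mono) auto
      then have xy: "a \<le> ?x" "?x \<le> ?y" "?y \<le> b"
        using d0 bn by (auto simp: algebra_simps)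
      have yx: "?y - ?x < \<delta>" using dlt by (simp add: algebra_simps)
      have hi: "h integrable_on {a..?y}" by (rule integrable_subinterval_real[OF h]) (use xy in auto)
      have mi: "m integrable_on {a..?y}" by (rule integrable_subinterval_real[OF m]) (use xy in auto)
      have ch: "integral {a..?y} h = integral {a..?x} h + integral {?x..?y} h"
        using Henstock_Kurzweil_Integration.integral_combine[OF xy(1,2) hi] by simp
      have cm: "integral {a..?y} m = integral {a..?x} m + integral {?x..?y} m"
        using Henstock_Kurzweil_Integration.integral_combine[OF xy(1,2) mi] by simp
      have IH: "norm (F ?x - F a - integral {a..?x} h) \<le> e * integral {a..?x} m"
        using Suc by simp
      have L: "norm (F ?y - F ?x - integral {?x..?y} h) \<le> e * integral {?x..?y} m"
        using loc'[OF xy yx] .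
      have "F ?y - F a - integral {a..?y} h = (F ?x - F a - integral {a..?x} h) + (F ?y - F ?x - integral {?x..?y} h)"
        unfolding ch by (simp add: algebra_simps)
      then have "norm (F ?y - F a - integral {a..?y} h) \<le> norm (F ?x - F a - integral {a..?x} h) + norm (F ?y - F ?x - integral {?x..?y} h)"
        by (metis norm_triangle_ineq)
      also have "\<dots> \<le> e * integral {a..?y} m" using IH L unfolding cm by (simp add: algebra_simps)
      finally show ?case .
    qed
    from this[of n] show ?thesis by (simp add: bn)
  qed
  have "norm (F b - F a - integral {a..b} h) \<le> 0"
  proof (cases "integral {a..b} m > 0")
    case True
    show ?thesis
    proof (rule ccontr)
      assume "\<not> ?thesis"
      then have N: "norm (F b - F a - integral {a..b} h) > 0" by simp
      have "norm (F b - F a - integral {a..b} h) \<le> (norm (F b - F a - integral {a..b} h) / (2 * integral {a..b} m)) * integral {a..b} m"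
        by (rule key) (use N True in simp)
      also have "\<dots> = norm (F b - F a - integral {a..b} h) / 2" using True by simp
      finally show False using N by simp
    qed
  next
    case False
    then show ?thesis using key[of 1] by linarith
  qed
  then show ?thesis by simp
qed



lemma ai_int: fixes f :: "'a::euclidean_space \<Rightarrow> 'b::euclidean_space" shows "f absolutely_integrable_on S \<Longrightarrow> f integrable_on S"
  by (simp add: absolutely_integrable_on_def)

lemma ai_norm_int: fixes f :: "'a::euclidean_space \<Rightarrow> 'b::euclidean_space" shows "f absolutely_integrable_on S \<Longrightarrow> (\<lambda>x. norm (f x)) integrable_on S"
  by (simp add: absolutely_integrable_on_def)

lemma indef_cont:
  fixes g :: "real \<Rightarrow> 'a::banach"
  assumes g: "g integrable_on {a..b}" and G: "\<And>x. x \<in> {a..b} \<Longrightarrow> G x = G a + integral {a..x} g"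
  shows "continuous_on {a..b} G"
proof (rule continuous_on_eq[OF continuous_on_add[OF continuous_on_const indefinite_integral_continuous_1[OF g]]])
  show "\<And>x. x \<in> {a..b} \<Longrightarrow> G a + integral {a..x} g = G x" by (rule G[symmetric])
qed

lemma indef_diff:
  fixes g :: "real \<Rightarrow> 'a::banach"
  assumes g: "g integrable_on {a..b}" and G: "\<And>x. x \<in> {a..b} \<Longrightarrow> G x = G a + integral {a..x} g"
    and xy: "a \<le> x" "x \<le> y" "y \<le> b"
  shows "(g has_integral (G y - G x)) {x..y}"
proof -
  have gy: "g integrable_on {a..y}" by (rule integrable_subinterval_real[OF g]) (use xy in auto)
  have "integral {a..x} g + integral {x..y} g = integral {a..y} g"
    using Henstock_Kurzweil_Integration.integral_combine[OF xy(1,2) gy] .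
  moreover have "G y = G a + integral {a..y} g" "G x = G a + integral {a..x} g" using xy by (auto intro!: G)
  moreover have "g integrable_on {x..y}" by (rule integrable_subinterval_real[OF g]) (use xy in auto)
  ultimately have "G y - G x = integral {x..y} g" "g integrable_on {x..y}"
    by (simp_all add: algebra_simps)
  then show ?thesis by (simp add: has_integral_integral)
qed

lemma product_rule:
  fixes G :: "real \<Rightarrow> 'a::euclidean_space" and H :: "real \<Rightarrow> 'b::euclidean_space"
    and bl :: "'a \<Rightarrow> 'b \<Rightarrow> 'c::euclidean_space"
  assumes bl: "bilinear bl" and ab: "a \<le> b"
    and g: "g absolutely_integrable_on {a..b}" and h: "h absolutely_integrable_on {a..b}"
    and G: "\<And>x. x \<in> {a..b} \<Longrightarrow> G x = G a + integral {a..x} g"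
    and H: "\<And>x. x \<in> {a..b} \<Longrightarrow> H x = H a + integral {a..x} h"
  shows "((\<lambda>s. bl (g s) (H s) + bl (G s) (h s)) has_integral (bl (G b) (H b) - bl (G a) (H a))) {a..b}"
proof -
  have bb: "bounded_bilinear bl" using bl bilinear_conv_bounded_bilinear by blast
  have gi: "g integrable_on {a..b}" and hi: "h integrable_on {a..b}" using g h by (auto intro: ai_int)
  have Gc: "continuous_on {a..b} G" by (rule indef_cont[OF gi G])
  have Hc: "continuous_on {a..b} H" by (rule indef_cont[OF hi H])
  let ?f = "\<lambda>s. bl (g s) (H s) + bl (G s) (h s)"
  have fai: "?f absolutely_integrable_on {a..b}"
    by (intro set_integral_add(1) cont_abs_prod'[OF bl Hc g] cont_abs_prod[OF bl Gc h])
  have fi: "?f integrable_on {a..b}" using fai by (rule ai_int)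
  let ?m = "\<lambda>s. norm (g s) + norm (h s)"
  have mi: "?m integrable_on {a..b}" using g h by (intro integrable_add ai_norm_int)
  obtain B where B0: "B > 0" and B: "\<And>x y. norm (bl x y) \<le> B * norm x * norm y"
    using bilinear_bounded_pos[OF bl] by blast
  have "(\<lambda>x. bl (G x) (H x)) b - (\<lambda>x. bl (G x) (H x)) a = integral {a..b} ?f"
  proof (rule riemann_lemma[OF ab fi mi])
    fix e :: real assume e: "e > 0"
    have ucG: "uniformly_continuous_on {a..b} G" by (rule compact_uniformly_continuous[OF Gc]) auto
    have ucH: "uniformly_continuous_on {a..b} H" by (rule compact_uniformly_continuous[OF Hc]) auto
    obtain dG where dG: "dG > 0" "\<And>x x'. x \<in> {a..b} \<Longrightarrow> x' \<in> {a..b} \<Longrightarrow> dist x' x < dG \<Longrightarrow> dist (G x') (G x) < e / B"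
    proof -
      have "e / B > 0" using e B0 by simp
      then show ?thesis using ucG that unfolding uniformly_continuous_on_def by blast
    qed
    obtain dH where dH: "dH > 0" "\<And>x x'. x \<in> {a..b} \<Longrightarrow> x' \<in> {a..b} \<Longrightarrow> dist x' x < dH \<Longrightarrow> dist (H x') (H x) < e / B"
    proof -
      have "e / B > 0" using e B0 by simp
      then show ?thesis using ucH that unfolding uniformly_continuous_on_def by blast
    qed
    show "\<exists>\<delta>>0. \<forall>x y. a \<le> x \<longrightarrow> x \<le> y \<longrightarrow> y \<le> b \<longrightarrow> y - x < \<delta> \<longrightarrow>
      norm (bl (G y) (H y) - bl (G x) (H x) - integral {x..y} ?f) \<le> e * integral {x..y} ?m"
    proof (intro exI[of _ "min dG dH"] conjI allI impI)
      show "min dG dH > 0" using dG dH by simp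
      fix x y assume xy: "a \<le> x" "x \<le> y" "y \<le> b" "y - x < min dG dH"
      have sub: "{x..y} \<subseteq> {a..b}" using xy by auto
      have I1: "((\<lambda>s. bl (g s) (H y)) has_integral bl (G y - G x) (H y)) {x..y}"
        using has_integral_linear[OF indef_diff[OF gi G xy(1-3)] bounded_bilinear.bounded_linear_left[OF bb]]
        by (simp add: o_def)
      have I2: "((\<lambda>s. bl (G x) (h s)) has_integral bl (G x) (H y - H x)) {x..y}"
        using has_integral_linear[OF indef_diff[OF hi H xy(1-3)] bounded_bilinear.bounded_linear_right[OF bb]]
        by (simp add: o_def)
      have fxy: "?f integrable_on {x..y}" by (rule integrable_subinterval_real[OF fi sub])
      have I3: "((\<lambda>s. bl (g s) (H y) + bl (G x) (h s) - ?f s) has_integral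
           (bl (G y - G x) (H y) + bl (G x) (H y - H x) - integral {x..y} ?f)) {x..y}"
        by (intro has_integral_diff has_integral_add I1 I2 integrable_integral fxy)
      have eqv: "bl (G y - G x) (H y) + bl (G x) (H y - H x) = bl (G y) (H y) - bl (G x) (H x)"
        by (simp add: bounded_bilinear.diff_left[OF bb] bounded_bilinear.diff_right[OF bb])
      have pt: "bl (g s) (H y) + bl (G x) (h s) - ?f s = bl (g s) (H y - H s) + bl (G x - G s) (h s)" for s
        by (simp add: bounded_bilinear.diff_left[OF bb] bounded_bilinear.diff_right[OF bb])
      have I4: "((\<lambda>s. bl (g s) (H y - H s) + bl (G x - G s) (h s)) has_integral
           (bl (G y) (H y) - bl (G x) (H x) - integral {x..y} ?f)) {x..y}"
        using I3 unfolding pt eqv .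
      have mxy: "?m integrable_on {x..y}" by (rule integrable_subinterval_real[OF mi sub])
      have "norm (integral {x..y} (\<lambda>s. bl (g s) (H y - H s) + bl (G x - G s) (h s))) \<le> integral {x..y} (\<lambda>s. e * ?m s)"
      proof (rule integral_norm_bound_integral)
        show "(\<lambda>s. bl (g s) (H y - H s) + bl (G x - G s) (h s)) integrable_on {x..y}" using I4 by blast
        show "(\<lambda>s. e * ?m s) integrable_on {x..y}" using integrable_on_cmult_left[OF mxy, of e] by simp
        fix s assume s: "s \<in> {x..y}"
        have s1: "dist (H y) (H s) < e / B" using dH(2)[of s y] s xy by (auto simp: dist_real_def)
        have s2: "dist (G x) (G s) < e / B" using dG(2)[of s x] s xy by (auto simp: dist_real_def)
        have "norm (bl (g s) (H y - H s) + bl (G x - G s) (h s)) \<le> norm (bl (g s) (H y - H s)) + norm (bl (G x - G s) (h s))"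
          by (rule norm_triangle_ineq)
        also have "\<dots> \<le> B * norm (g s) * norm (H y - H s) + B * norm (G x - G s) * norm (h s)"
          by (intro add_mono B)
        also have "\<dots> \<le> B * norm (g s) * (e / B) + B * (e / B) * norm (h s)"
          using s1 s2 B0 by (intro add_mono mult_left_mono mult_right_mono) (auto simp: dist_norm)
        also have "\<dots> = e * ?m s" using B0 by (simp add: field_simps)
        finally show "norm (bl (g s) (H y - H s) + bl (G x - G s) (h s)) \<le> e * ?m s" .
      qed
      then show "norm (bl (G y) (H y) - bl (G x) (H x) - integral {x..y} ?f) \<le> e * integral {x..y} ?m"
        using I4 by (simp add: integral_unique)
    qed
  qed
  then show ?thesis using fi by (simp add: has_integral_integral)
qed



lemma chain_rule:
  fixes \<phi> \<phi>' \<theta> \<beta> :: "real \<Rightarrow> real"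
  assumes der: "\<And>x. DERIV \<phi> x :> \<phi>' x" and lip: "\<And>x y. \<bar>\<phi>' x - \<phi>' y\<bar> \<le> \<bar>x - y\<bar>"
    and ab: "a \<le> b" and \<beta>: "\<beta> absolutely_integrable_on {a..b}"
    and T: "\<And>x. x \<in> {a..b} \<Longrightarrow> \<theta> x = \<theta> a + integral {a..x} \<beta>"
  shows "((\<lambda>s. \<phi>' (\<theta> s) * \<beta> s) has_integral (\<phi> (\<theta> b) - \<phi> (\<theta> a))) {a..b}"
proof -
  have bi: "\<beta> integrable_on {a..b}" using \<beta> by (rule ai_int)
  have Tc: "continuous_on {a..b} \<theta>" by (rule indef_cont[OF bi T])
  have "lipschitz_on 1 UNIV \<phi>'" using lip by (simp add: lipschitz_on_def dist_real_def)
  then have pc: "continuous_on UNIV \<phi>'" by (rule lipschitz_on_continuous_on)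
  have PTc: "continuous_on {a..b} (\<lambda>s. \<phi>' (\<theta> s))"
    by (rule continuous_on_compose2[OF pc Tc]) auto
  let ?f = "\<lambda>s. \<phi>' (\<theta> s) * \<beta> s"
  have fi: "?f integrable_on {a..b}"
    using cont_abs_prod[OF bilinear_times PTc \<beta>] by (rule ai_int)
  let ?m = "\<lambda>s. norm (\<beta> s)"
  have mi: "?m integrable_on {a..b}" using \<beta> by (rule ai_norm_int)
  have "(\<lambda>x. \<phi> (\<theta> x)) b - (\<lambda>x. \<phi> (\<theta> x)) a = integral {a..b} ?f"
  proof (rule riemann_lemma[OF ab fi mi])
    fix e :: real assume e: "e > 0"
    have uc: "uniformly_continuous_on {a..b} \<theta>" by (rule compact_uniformly_continuous[OF Tc]) auto
    obtain d where d: "d > 0" "\<And>x x'. x \<in> {a..b} \<Longrightarrow> x' \<in> {a..b} \<Longrightarrow> dist x' x < d \<Longrightarrow> dist (\<theta> x') (\<theta> x) < e / 2"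
    proof -
      have "e / 2 > 0" using e by simp
      then show ?thesis using uc that unfolding uniformly_continuous_on_def by blast
    qed
    show "\<exists>\<delta>>0. \<forall>x y. a \<le> x \<longrightarrow> x \<le> y \<longrightarrow> y \<le> b \<longrightarrow> y - x < \<delta> \<longrightarrow>
      norm (\<phi> (\<theta> y) - \<phi> (\<theta> x) - integral {x..y} ?f) \<le> e * integral {x..y} ?m"
    proof (intro exI[of _ d] conjI allI impI)
      show "d > 0" using d by simp
      fix x y assume xy: "a \<le> x" "x \<le> y" "y \<le> b" "y - x < d"
      have sub: "{x..y} \<subseteq> {a..b}" using xy by auto
      have I: "(\<beta> has_integral (\<theta> y - \<theta> x)) {x..y}" by (rule indef_diff[OF bi T xy(1-3)])
      obtain \<xi> where xi: "\<bar>\<xi> - \<theta> x\<bar> \<le> \<bar>\<theta> y - \<theta> x\<bar>" "\<phi> (\<theta> y) - \<phi> (\<theta> x) = \<phi>' \<xi> * (\<theta> y - \<theta> x)"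
        using mvt_any[OF der] by blast
      have I1: "((\<lambda>s. \<phi>' \<xi> * \<beta> s) has_integral (\<phi> (\<theta> y) - \<phi> (\<theta> x))) {x..y}"
        unfolding xi(2) by (rule has_integral_mult_right[OF I])
      have fxy: "?f integrable_on {x..y}" by (rule integrable_subinterval_real[OF fi sub])
      have I2: "((\<lambda>s. \<phi>' \<xi> * \<beta> s - ?f s) has_integral (\<phi> (\<theta> y) - \<phi> (\<theta> x) - integral {x..y} ?f)) {x..y}"
        by (intro has_integral_diff I1 integrable_integral fxy)
      have mxy: "?m integrable_on {x..y}" by (rule integrable_subinterval_real[OF mi sub])
      have "norm (integral {x..y} (\<lambda>s. \<phi>' \<xi> * \<beta> s - ?f s)) \<le> integral {x..y} (\<lambda>s. e * ?m s)"
      proof (rule integral_norm_bound_integral)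
        show "(\<lambda>s. \<phi>' \<xi> * \<beta> s - ?f s) integrable_on {x..y}" using I2 by blast
        show "(\<lambda>s. e * ?m s) integrable_on {x..y}" using integrable_on_cmult_left[OF mxy, of e] by simp
        fix s assume s: "s \<in> {x..y}"
        have s1: "\<bar>\<theta> y - \<theta> x\<bar> < e / 2" using d(2)[of x y] s xy by (auto simp: dist_real_def)
        have s2: "\<bar>\<theta> x - \<theta> s\<bar> < e / 2" using d(2)[of s x] s xy by (auto simp: dist_real_def)
        have "\<bar>\<phi>' \<xi> - \<phi>' (\<theta> s)\<bar> \<le> \<bar>\<xi> - \<theta> s\<bar>" by (rule lip)
        also have "\<dots> \<le> e" using xi(1) s1 s2 by linarith
        finally have "\<bar>\<phi>' \<xi> - \<phi>' (\<theta> s)\<bar> * \<bar>\<beta> s\<bar> \<le> e * \<bar>\<beta> s\<bar>" by (intro mult_right_mono) auto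
        then show "norm (\<phi>' \<xi> * \<beta> s - ?f s) \<le> e * ?m s"
          by (simp add: abs_mult left_diff_distrib[symmetric])
      qed
      then show "norm (\<phi> (\<theta> y) - \<phi> (\<theta> x) - integral {x..y} ?f) \<le> e * integral {x..y} ?m"
        using I2 by (simp add: integral_unique)
    qed
  qed
  then show ?thesis using fi by (simp add: has_integral_integral)
qed



definition K1 :: "real^3^3" where
  "K1 = vector [vector [1,0,0], vector [0,1,0], vector [0,0,0]]"
definition K0 :: "real^3^3" where
  "K0 = vector [vector [0,0,0], vector [0,0,0], vector [0,0,1]]"
definition Rmat :: "real \<Rightarrow> real \<Rightarrow> real^3^3" where
  "Rmat c s = c *\<^sub>R K1 + s *\<^sub>R E3 + K0"
definition A1 :: "real^3 \<Rightarrow> real^3^3" where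
  "A1 u = (u$1) *\<^sub>R E1 + (u$2) *\<^sub>R (- E3) + (u$3) *\<^sub>R E2"
definition A2 :: "real^3 \<Rightarrow> real^3^3" where
  "A2 u = (u$1) *\<^sub>R E1 + (u$3) *\<^sub>R E2"
definition Qv :: "real \<Rightarrow> real \<Rightarrow> real^3 \<Rightarrow> real^3" where
  "Qv c s u = vector [c * u$1 + s * u$3, u$2, - s * u$1 + c * u$3]"

lemmas mat_simps = vec_eq_iff forall_3 matrix_matrix_mult_def sum_3 E1_def E2_def E3_def K1_def K0_def
  Rmat_def A1_def A2_def Qv_def

lemma fw_id:
  assumes "c^2 + s^2 = 1"
  shows "A1 u ** Rmat c s + u$2 *\<^sub>R (Rmat c s ** E3) = Rmat c s ** A2 (Qv c s u)"
  using assms by (simp add: mat_simps) algebra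

lemma bw_id:
  assumes "c^2 + s^2 = 1"
  shows "A2 w ** Rmat c (-s) + (- w$2) *\<^sub>R (Rmat c (-s) ** E3) = Rmat c (-s) ** A1 (Qv c (-s) w)"
  using assms by (simp add: mat_simps) algebra

lemma Rmat_inv: "c^2 + s^2 = 1 \<Longrightarrow> Rmat c s ** Rmat c (-s) = mat 1"
  by (simp add: mat_simps mat_def) algebra

lemma Rmat_0: "Rmat 1 0 = mat 1"
  by (simp add: mat_simps mat_def)

lemma Ctilde_eq: "Ctilde C v = C ** Rmat (cos v) (sin v)"
  by (simp add: mat_simps Ctilde_def)

lemma norm_Qv: "c^2 + s^2 = 1 \<Longrightarrow> norm (Qv c s u) = norm u"
proof -
  assume h: "c^2 + s^2 = 1"
  have "inner (Qv c s u) (Qv c s u) = inner u u"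
    using h by (simp add: Qv_def inner_vec_def sum_3) algebra
  then show ?thesis by (simp add: norm_eq_sqrt_inner)
qed

lemma Rm_E3: "Rmat c s ** E3 = c *\<^sub>R E3 + (-s) *\<^sub>R K1"
  by (simp add: mat_simps)



lemma bilinear_sR: "bilinear (\<lambda>(c::real) (x::'a::real_vector). c *\<^sub>R x)"
  by (simp add: bilinear_def linear_iff algebra_simps scaleR_add_left)

lemma rot_chain:
  fixes \<theta> \<beta> :: "real \<Rightarrow> real"
  assumes ab: "a \<le> b" and \<beta>: "\<beta> absolutely_integrable_on {a..b}"
    and T: "\<And>x. x \<in> {a..b} \<Longrightarrow> \<theta> x = \<theta> a + integral {a..x} \<beta>"
  shows "((\<lambda>s. \<beta> s *\<^sub>R (Rmat (cos (\<theta> s)) (sin (\<theta> s)) ** E3)) has_integral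
     (Rmat (cos (\<theta> b)) (sin (\<theta> b)) - Rmat (cos (\<theta> a)) (sin (\<theta> a)))) {a..b}"
proof -
  have S: "((\<lambda>s. cos (\<theta> s) * \<beta> s) has_integral (sin (\<theta> b) - sin (\<theta> a))) {a..b}"
    by (rule chain_rule[OF DERIV_sin lip_cos ab \<beta> T])
  have lip': "\<bar>- sin x - - sin y\<bar> \<le> \<bar>x - y\<bar>" for x y :: real using lip_sin[of x y] by simp
  have Cc: "((\<lambda>s. - sin (\<theta> s) * \<beta> s) has_integral (cos (\<theta> b) - cos (\<theta> a))) {a..b}"
    by (rule chain_rule[OF DERIV_cos lip' ab \<beta> T])
  have "((\<lambda>s. (cos (\<theta> s) * \<beta> s) *\<^sub>R E3 + (- sin (\<theta> s) * \<beta> s) *\<^sub>R K1) has_integral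
      ((sin (\<theta> b) - sin (\<theta> a)) *\<^sub>R E3 + (cos (\<theta> b) - cos (\<theta> a)) *\<^sub>R K1)) {a..b}"
    by (intro has_integral_add has_integral_scaleR_left S Cc)
  moreover have "\<And>s. (cos (\<theta> s) * \<beta> s) *\<^sub>R E3 + (- sin (\<theta> s) * \<beta> s) *\<^sub>R K1
      = \<beta> s *\<^sub>R (Rmat (cos (\<theta> s)) (sin (\<theta> s)) ** E3)"
    by (simp add: Rm_E3 algebra_simps)
  moreover have "(sin (\<theta> b) - sin (\<theta> a)) *\<^sub>R E3 + (cos (\<theta> b) - cos (\<theta> a)) *\<^sub>R K1
      = Rmat (cos (\<theta> b)) (sin (\<theta> b)) - Rmat (cos (\<theta> a)) (sin (\<theta> a))"
    by (simp add: Rmat_def algebra_simps)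
  ultimately show ?thesis by simp
qed

lemma key:
  fixes G P :: "real \<Rightarrow> real^3^3" and \<theta> \<beta> :: "real \<Rightarrow> real"
  assumes ab: "a \<le> b" and P: "P absolutely_integrable_on {a..b}"
    and GPi: "(\<lambda>s. G s ** P s) integrable_on {a..b}"
    and G: "\<And>x. x \<in> {a..b} \<Longrightarrow> G x = G a + integral {a..x} (\<lambda>s. G s ** P s)"
    and \<beta>: "\<beta> absolutely_integrable_on {a..b}"
    and T: "\<And>x. x \<in> {a..b} \<Longrightarrow> \<theta> x = \<theta> a + integral {a..x} \<beta>"
  shows "((\<lambda>s. (G s ** P s) ** Rmat (cos (\<theta> s)) (sin (\<theta> s)) + G s ** (\<beta> s *\<^sub>R (Rmat (cos (\<theta> s)) (sin (\<theta> s)) ** E3)))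
     has_integral (G b ** Rmat (cos (\<theta> b)) (sin (\<theta> b)) - G a ** Rmat (cos (\<theta> a)) (sin (\<theta> a)))) {a..b}"
proof -
  have Gc: "continuous_on {a..b} G" by (rule indef_cont[OF GPi G])
  have Tc: "continuous_on {a..b} \<theta>" by (rule indef_cont[OF ai_int[OF \<beta>] T])
  have g: "(\<lambda>s. G s ** P s) absolutely_integrable_on {a..b}" by (rule cont_abs_prod[OF bilinear_mm Gc P])
  have Rc: "continuous_on {a..b} (\<lambda>s. Rmat (cos (\<theta> s)) (sin (\<theta> s)) ** E3)"
    unfolding Rm_E3 by (intro continuous_intros Tc)
  have h: "(\<lambda>s. \<beta> s *\<^sub>R (Rmat (cos (\<theta> s)) (sin (\<theta> s)) ** E3)) absolutely_integrable_on {a..b}"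
    by (rule cont_abs_prod'[OF bilinear_sR Rc \<beta>])
  have H: "Rmat (cos (\<theta> x)) (sin (\<theta> x)) = Rmat (cos (\<theta> a)) (sin (\<theta> a)) +
      integral {a..x} (\<lambda>s. \<beta> s *\<^sub>R (Rmat (cos (\<theta> s)) (sin (\<theta> s)) ** E3))" if x: "x \<in> {a..b}" for x
  proof -
    have \<beta>x: "\<beta> absolutely_integrable_on {a..x}"
      using absolutely_integrable_on_subcbox[OF \<beta>, of a x] x by simp
    have ax: "a \<le> x" using x by simp
    have Tx: "\<theta> y = \<theta> a + integral {a..y} \<beta>" if "y \<in> {a..x}" for y
      by (rule T) (use x that in simp)
    have "((\<lambda>s. \<beta> s *\<^sub>R (Rmat (cos (\<theta> s)) (sin (\<theta> s)) ** E3)) has_integral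
     (Rmat (cos (\<theta> x)) (sin (\<theta> x)) - Rmat (cos (\<theta> a)) (sin (\<theta> a)))) {a..x}"
      by (rule rot_chain[OF ax \<beta>x Tx])
    then show ?thesis by (simp add: integral_unique)
  qed
  show ?thesis
    by (rule product_rule[OF bilinear_mm ab g h G H])
qed



definition Q1 :: "real^3^3" where "Q1 = vector [vector [1,0,0], vector [0,0,0], vector [0,0,1]]"
definition Q2 :: "real^3^3" where "Q2 = vector [vector [0,0,1], vector [0,0,0], vector [-1,0,0]]"
definition Q0 :: "real^3^3" where "Q0 = vector [vector [0,0,0], vector [0,1,0], vector [0,0,0]]"

lemma Qv_mat: "Qv c s u = (c *\<^sub>R Q1 + s *\<^sub>R Q2 + Q0) *v u"
  by (simp add: vec_eq_iff forall_3 matrix_vector_mult_def sum_3 Qv_def Q1_def Q2_def Q0_def)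

lemma linear_A1: "bounded_linear A1"
  by (rule linear_conv_bounded_linear[THEN iffD1]) (simp add: linear_iff A1_def algebra_simps scaleR_add_left)

lemma linear_A2: "bounded_linear A2"
  by (rule linear_conv_bounded_linear[THEN iffD1]) (simp add: linear_iff A2_def algebra_simps scaleR_add_left)

lemma hz_unpack:
  assumes h: "horizontal A b C v u"
  shows "u absolutely_integrable_on {0..1}"
    and "(\<lambda>s. C s ** A (u s)) integrable_on {0..1}"
    and "(\<lambda>s. b (u s)) integrable_on {0..1}"
    and "\<And>t. t \<in> {0..1} \<Longrightarrow> C t = C 0 + integral {0..t} (\<lambda>s. C s ** A (u s))"
    and "\<And>t. t \<in> {0..1} \<Longrightarrow> v t = v 0 + integral {0..t} (\<lambda>s. b (u s))"
  using h unfolding horizontal_def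
  by (auto dest!: integral_unique simp: has_integral_integrable_integral)



lemma sc1: "(cos x)^2 + (sin x)^2 = 1" for x :: real by (simp add: add.commute)

lemma transfer_lemma:
  fixes Cc :: "real \<Rightarrow> real^3^3" and vv :: "real \<Rightarrow> real" and u :: "real \<Rightarrow> real^3"
    and AA AB :: "real^3 \<Rightarrow> real^3^3" and \<sigma> :: real and c s :: "real \<Rightarrow> real"
  assumes hz: "horizontal AA (\<lambda>u. u$2) Cc vv u"
    and lAA: "bounded_linear AA"
    and \<sigma>: "\<sigma> = 1 \<or> \<sigma> = -1"
    and cdef: "\<And>x. c x = cos (vv x)" and sdef: "\<And>x. s x = \<sigma> * sin (vv x)"
    and ident: "\<And>u x. AA u ** Rmat (c x) (s x) + (\<sigma> * u$2) *\<^sub>R (Rmat (c x) (s x) ** E3)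
                  = Rmat (c x) (s x) ** AB (Qv (c x) (s x) u)"
  shows "horizontal AB (\<lambda>u. u$2) (\<lambda>t. Cc t ** Rmat (c t) (s t)) vv (\<lambda>x. Qv (c x) (s x) (u x))"
    and "\<And>x. norm (Qv (c x) (s x) (u x)) = norm (u x)"
proof -
  note U = hz_unpack[OF hz]
  have cs: "(c x)^2 + (s x)^2 = 1" for x using \<sigma> by (auto simp: cdef sdef power_mult_distrib)
  show nm: "\<And>x. norm (Qv (c x) (s x) (u x)) = norm (u x)" by (rule norm_Qv[OF cs])
  have b2: "(\<lambda>x. u x $ 2) absolutely_integrable_on {0..1}"
    using absolutely_integrable_linear[OF U(1) bounded_linear_vec_nth[of 2]] by (simp add: o_def)
  have vc: "continuous_on {0..1} vv" by (rule indef_cont[OF U(3) U(5)]) (use U(5) in auto)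
  have Qc: "continuous_on {0..1} (\<lambda>x. c x *\<^sub>R Q1 + s x *\<^sub>R Q2 + Q0)"
    unfolding cdef sdef by (intro continuous_intros vc)
  have wai: "(\<lambda>x. Qv (c x) (s x) (u x)) absolutely_integrable_on {0..1}"
    unfolding Qv_mat by (rule cont_abs_prod[OF bilinear_mv Qc U(1)])
  have b2eq: "(\<lambda>x. Qv (c x) (s x) (u x) $ 2) = (\<lambda>x. u x $ 2)" by (simp add: Qv_def)
  show "horizontal AB (\<lambda>u. u$2) (\<lambda>t. Cc t ** Rmat (c t) (s t)) vv (\<lambda>x. Qv (c x) (s x) (u x))"
    unfolding horizontal_def
  proof (intro conjI ballI wai)
    fix t :: real assume t: "t \<in> {0..1}"
    show "((\<lambda>x. Qv (c x) (s x) (u x) $ 2) has_integral vv t - vv 0) {0..t}"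
      unfolding b2eq using hz t unfolding horizontal_def by blast
    have sub: "{0..t} \<subseteq> {0..1}" using t by auto
    have t0: "0 \<le> t" using t by simp
    have P: "(\<lambda>x. AA (u x)) absolutely_integrable_on {0..t}"
      using absolutely_integrable_linear[OF absolutely_integrable_on_subcbox[OF U(1), of 0 t] lAA] t
      by (simp add: o_def)
    have GPi: "(\<lambda>x. Cc x ** AA (u x)) integrable_on {0..t}" by (rule integrable_subinterval_real[OF U(2) sub])
    have G: "Cc x = Cc 0 + integral {0..x} (\<lambda>s. Cc s ** AA (u s))" if "x \<in> {0..t}" for x
      by (rule U(4)) (use that t in simp)
    have \<beta>: "(\<lambda>x. \<sigma> * u x $ 2) absolutely_integrable_on {0..t}"
      using absolutely_integrable_on_subcbox[OF b2, of 0 t] t by simp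
    have T: "\<sigma> * vv x = \<sigma> * vv 0 + integral {0..x} (\<lambda>x. \<sigma> * u x $ 2)" if "x \<in> {0..t}" for x
    proof -
      have "vv x = vv 0 + integral {0..x} (\<lambda>x. u x $ 2)" by (rule U(5)) (use that t in simp)
      then show ?thesis by (simp add: algebra_simps)
    qed
    have Rw: "Rmat (cos (\<sigma> * vv x)) (sin (\<sigma> * vv x)) = Rmat (c x) (s x)" for x
      using \<sigma> by (auto simp: cdef sdef)
    have K: "((\<lambda>x. (Cc x ** AA (u x)) ** Rmat (c x) (s x) + Cc x ** ((\<sigma> * u x $ 2) *\<^sub>R (Rmat (c x) (s x) ** E3)))
       has_integral (Cc t ** Rmat (c t) (s t) - Cc 0 ** Rmat (c 0) (s 0))) {0..t}"
      using key[OF t0 P GPi G \<beta> T] unfolding Rw .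
    have pt: "(Cc x ** AA (u x)) ** Rmat (c x) (s x) + Cc x ** ((\<sigma> * u x $ 2) *\<^sub>R (Rmat (c x) (s x) ** E3))
       = (Cc x ** Rmat (c x) (s x)) ** AB (Qv (c x) (s x) (u x))" for x
      by (simp add: matrix_mul_assoc[symmetric] matrix_add_ldistrib[symmetric] ident)
    show "((\<lambda>x. (Cc x ** Rmat (c x) (s x)) ** AB (Qv (c x) (s x) (u x))) has_integral
          Cc t ** Rmat (c t) (s t) - Cc 0 ** Rmat (c 0) (s 0)) {0..t}"
      using K unfolding pt .
  qed
qed



lemma fwd:
  assumes hz: "horizontal A1 (\<lambda>u. u$2) Cc vv u" and "Cc 0 = mat 1" "vv 0 = 0" "Cc 1 = C" "vv 1 = v"
  shows "\<exists>D w. horizontal A2 (\<lambda>u. u$2) D vv w \<and> D 0 = mat 1 \<and> vv 0 = 0 \<and> D 1 = Ctilde C v \<and> vv 1 = v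
     \<and> integral {0..1} (\<lambda>s. norm (w s)) = integral {0..1} (\<lambda>s. norm (u s))"
proof -
  have ident: "A1 u ** Rmat (cos (vv x)) (1 * sin (vv x)) + (1 * u$2) *\<^sub>R (Rmat (cos (vv x)) (1 * sin (vv x)) ** E3)
                  = Rmat (cos (vv x)) (1 * sin (vv x)) ** A2 (Qv (cos (vv x)) (1 * sin (vv x)) u)" for u x
    using fw_id[OF sc1] by simp
  note T = transfer_lemma[OF hz linear_A1 disjI1[OF refl] refl refl ident]
  show ?thesis
    by (intro exI conjI, rule T(1)) (use assms in \<open>simp_all add: T(2)[simplified] Rmat_0 Ctilde_eq\<close>)
qed

lemma bwd:
  assumes hz: "horizontal A2 (\<lambda>u. u$2) D vv w" and "D 0 = mat 1" "vv 0 = 0" "D 1 = Ctilde C v" "vv 1 = v"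
  shows "\<exists>Cc u. horizontal A1 (\<lambda>u. u$2) Cc vv u \<and> Cc 0 = mat 1 \<and> vv 0 = 0 \<and> Cc 1 = C \<and> vv 1 = v
     \<and> integral {0..1} (\<lambda>s. norm (u s)) = integral {0..1} (\<lambda>s. norm (w s))"
proof -
  have ident: "A2 u ** Rmat (cos (vv x)) (-1 * sin (vv x)) + (-1 * u$2) *\<^sub>R (Rmat (cos (vv x)) (-1 * sin (vv x)) ** E3)
                  = Rmat (cos (vv x)) (-1 * sin (vv x)) ** A1 (Qv (cos (vv x)) (-1 * sin (vv x)) u)" for u x
    using bw_id[OF sc1] by simp
  note T = transfer_lemma[OF hz linear_A2 disjI2[OF refl] refl refl ident]
  have "C ** Rmat (cos v) (sin v) ** Rmat (cos v) (- sin v) = C"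
    by (simp add: matrix_mul_assoc[symmetric] Rmat_inv[OF sc1] matrix_mul_rid)
  note inv = this
  show ?thesis
    by (intro exI conjI, rule T(1)) (use assms inv in \<open>simp_all add: T(2)[simplified] Rmat_0 Ctilde_eq\<close>)
qed

lemma main_eq: "sr_dist A1 (\<lambda>u. u$2) C v = sr_dist A2 (\<lambda>u. u$2) (Ctilde C v) v"
  unfolding sr_dist_def
proof (rule arg_cong[where f = Inf])
  show "{integral {0..1} (\<lambda>s. norm (u s)) |Cc vv u. horizontal A1 (\<lambda>u. u$2) Cc vv u \<and> Cc 0 = mat 1 \<and> vv 0 = 0 \<and> Cc 1 = C \<and> vv 1 = v} =
    {integral {0..1} (\<lambda>s. norm (u s)) |Cc vv u. horizontal A2 (\<lambda>u. u$2) Cc vv u \<and> Cc 0 = mat 1 \<and> vv 0 = 0 \<and> Cc 1 = Ctilde C v \<and> vv 1 = v}"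
  proof (intro set_eqI iffI)
    fix x assume "x \<in> {integral {0..1} (\<lambda>s. norm (u s)) |Cc vv u. horizontal A1 (\<lambda>u. u$2) Cc vv u \<and> Cc 0 = mat 1 \<and> vv 0 = 0 \<and> Cc 1 = C \<and> vv 1 = v}"
    then obtain Cc vv u where x: "x = integral {0..1} (\<lambda>s. norm (u s))" and h: "horizontal A1 (\<lambda>u. u$2) Cc vv u" "Cc 0 = mat 1" "vv 0 = 0" "Cc 1 = C" "vv 1 = v"
      by blast
    from fwd[OF h] obtain D w where "horizontal A2 (\<lambda>u. u$2) D vv w \<and> D 0 = mat 1 \<and> vv 0 = 0 \<and> D 1 = Ctilde C v \<and> vv 1 = v
     \<and> integral {0..1} (\<lambda>s. norm (w s)) = integral {0..1} (\<lambda>s. norm (u s))" by blast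
    note hh = this
    show "x \<in> {integral {0..1} (\<lambda>s. norm (u s)) |Cc vv u. horizontal A2 (\<lambda>u. u$2) Cc vv u \<and> Cc 0 = mat 1 \<and> vv 0 = 0 \<and> Cc 1 = Ctilde C v \<and> vv 1 = v}"
      unfolding x
      by (rule CollectI, rule exI[of _ D], rule exI[of _ vv], rule exI[of _ w]) (use hh in simp)
  next
    fix x assume "x \<in> {integral {0..1} (\<lambda>s. norm (u s)) |Cc vv u. horizontal A2 (\<lambda>u. u$2) Cc vv u \<and> Cc 0 = mat 1 \<and> vv 0 = 0 \<and> Cc 1 = Ctilde C v \<and> vv 1 = v}"
    then obtain D vv w where x: "x = integral {0..1} (\<lambda>s. norm (w s))" and h: "horizontal A2 (\<lambda>u. u$2) D vv w" "D 0 = mat 1" "vv 0 = 0" "D 1 = Ctilde C v" "vv 1 = v"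
      by blast
    from bwd[OF h] obtain Cc u where "horizontal A1 (\<lambda>u. u$2) Cc vv u \<and> Cc 0 = mat 1 \<and> vv 0 = 0 \<and> Cc 1 = C \<and> vv 1 = v
     \<and> integral {0..1} (\<lambda>s. norm (u s)) = integral {0..1} (\<lambda>s. norm (w s))" by blast
    note hh = this
    show "x \<in> {integral {0..1} (\<lambda>s. norm (u s)) |Cc vv u. horizontal A1 (\<lambda>u. u$2) Cc vv u \<and> Cc 0 = mat 1 \<and> vv 0 = 0 \<and> Cc 1 = C \<and> vv 1 = v}"
      unfolding x
      by (rule CollectI, rule exI[of _ Cc], rule exI[of _ vv], rule exI[of _ u]) (use hh in simp)
  qed
qed

theorem proposition14:
  fixes C :: "real^3^3" and v :: real
  assumes "orthogonal_matrix C" and "det C = 1"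
  shows "rho1 C v = rho2 (Ctilde C v) v"
proof -
  have a1: "(\<lambda>u. (u$1) *\<^sub>R E1 + (u$2) *\<^sub>R (- E3) + (u$3) *\<^sub>R E2) = A1" by (simp add: fun_eq_iff A1_def)
  have a2: "(\<lambda>u. (u$1) *\<^sub>R E1 + (u$3) *\<^sub>R E2) = A2" by (simp add: fun_eq_iff A2_def)
  show ?thesis unfolding rho1_def rho2_def a1 a2 by (rule main_eq)
qed

end
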